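(* Let $X$ be a Banach space. (a) If $X$ is $(1,k)$-$\mathrm{SQ}_1$ for some $k\in(0,1]$ (in particular, if $X$ is $(1,<1)$-$\mathrm{SQ}_{<\aleph_0}$), then the closed unit ball $B_X$ has no extreme points. (b) If $X$ is $(k,1)$-$\mathrm{SQ}_1$ for some $k\in(0,1]$ (in particular, if $X$ is $(<1,1)$-$\mathrm{SQ}_{<\aleph_0}$), then $X$ is not strictly convex.
   Context: For $r,s\in(0,1]$: $X$ is $(r,s)$-$\mathrm{SQ}_{1}$ if for every set $A\subset S_X$ with $|A|\le 1$ there exists $y\in S_X$ with $\|rx\pm sy\|\le 1$ for all $x\in A$; $X$ is $(r,s)$-$\mathrm{SQ}_{<\aleph_0}$ if the same holds for every finite $A\subset S_X$. $X$ is $(1,<1)$-$\mathrm{SQ}_{<\aleph_0}$ if it is $(1,t)$-$\mathrm{SQ}_{<\aleph_0}$ for every $t\in(0,1)$, and $(<1,1)$-$\mathrm{SQ}_{<\aleph_0}$ if it is $(t,1)$-$\mathrm{SQ}_{<\aleph_0}$ for every $t\in(0,1)$. *)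

theory Defs
  imports "HOL-Analysis.Analysis"
begin

text \<open>The space X is the type 'a (a real Banach space); its unit sphere is sphere 0 1
  and its closed unit ball is cball 0 1.\<close>

definition SQ_1 :: "'a::real_normed_vector itself \<Rightarrow> real \<Rightarrow> real \<Rightarrow> bool" where
  "SQ_1 _ r s \<longleftrightarrow>
     (\<forall>A::'a set. A \<subseteq> sphere 0 1 \<and> finite A \<and> card A \<le> 1 \<longrightarrow>
        (\<exists>y\<in>sphere 0 1. \<forall>x\<in>A. norm (r *\<^sub>R x + s *\<^sub>R y) \<le> 1 \<and> norm (r *\<^sub>R x - s *\<^sub>R y) \<le> 1))"

definition SQ_fin :: "'a::real_normed_vector itself \<Rightarrow> real \<Rightarrow> real \<Rightarrow> bool" where
  "SQ_fin _ r s \<longleftrightarrow>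
     (\<forall>A::'a set. A \<subseteq> sphere 0 1 \<and> finite A \<longrightarrow>
        (\<exists>y\<in>sphere 0 1. \<forall>x\<in>A. norm (r *\<^sub>R x + s *\<^sub>R y) \<le> 1 \<and> norm (r *\<^sub>R x - s *\<^sub>R y) \<le> 1))"

definition SQ_fin_one_lt1 :: "'a::real_normed_vector itself \<Rightarrow> bool" where
  "SQ_fin_one_lt1 T \<longleftrightarrow> (\<forall>t\<in>{0<..<1}. SQ_fin T 1 t)"

definition SQ_fin_lt1_one :: "'a::real_normed_vector itself \<Rightarrow> bool" where
  "SQ_fin_lt1_one T \<longleftrightarrow> (\<forall>t\<in>{0<..<1}. SQ_fin T t 1)"

definition strictly_convex_space :: "'a::real_normed_vector itself \<Rightarrow> bool" where
  "strictly_convex_space _ \<longleftrightarrow>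
     (\<forall>x::'a. \<forall>y. norm x = 1 \<and> norm y = 1 \<and> x \<noteq> y \<longrightarrow> norm (x + y) < 2)"

end

theory Submission
  imports Defs
begin

lemma notext:
  fixes x d :: "'a::real_normed_vector"
  assumes "d \<noteq> 0" "norm (x + d) \<le> 1" "norm (x - d) \<le> 1"
  shows "\<not> x extreme_point_of cball 0 1"
proof
  assume e: "x extreme_point_of cball 0 1"
  have m: "midpoint (x + d) (x - d) = x"
    by (simp add: midpoint_def algebra_simps scaleR_2 flip: scaleR_add_right)
  have dd: "(x + d) - (x - d) = 2 *\<^sub>R d" by (simp add: scaleR_2)
  have "x + d \<noteq> x - d"
  proof
    assume "x + d = x - d"
    then have "2 *\<^sub>R d = 0" using dd by simp
    then show False using assms(1) by simp
  qed
  then have "x \<in> open_segment (x + d) (x - d)"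
    using midpoint_in_open_segment m by metis
  with e assms show False by (auto simp: extreme_point_of_def)
qed

lemma SQ_1_nonempty:
  assumes "SQ_1 TYPE('a::real_normed_vector) r s"
  shows "\<exists>y::'a. norm y = 1"
  using assms[unfolded SQ_1_def, rule_format, of "{}"] by auto

lemma SQ_1_single:
  fixes x :: "'a::real_normed_vector"
  assumes "SQ_1 TYPE('a) r s" "norm x = 1"
  shows "\<exists>y::'a. norm y = 1 \<and> norm (r *\<^sub>R x + s *\<^sub>R y) \<le> 1 \<and> norm (r *\<^sub>R x - s *\<^sub>R y) \<le> 1"
  using assms(1)[unfolded SQ_1_def, rule_format, of "{x}"] assms(2) by auto

lemma partA:
  assumes "k \<in> {0<..1}" "SQ_1 TYPE('a::real_normed_vector) 1 k"
  shows "\<not> (x::'a) extreme_point_of cball 0 1"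
proof (cases "norm x \<le> 1")
  case False then show ?thesis by (auto simp: extreme_point_of_def)
next
  case True
  show ?thesis
  proof (cases "norm x = 1")
    case True
    then obtain y :: 'a where y: "norm y = 1" "norm (x + k *\<^sub>R y) \<le> 1" "norm (x - k *\<^sub>R y) \<le> 1"
      using SQ_1_single[OF assms(2)] by fastforce
    have "k *\<^sub>R y \<noteq> 0" using y(1) assms(1) by auto
    then show ?thesis using notext y by blast
  next
    case False
    obtain y :: 'a where y: "norm y = 1" using SQ_1_nonempty[OF assms(2)] by blast
    define d where "d = (1 - norm x) *\<^sub>R y"
    have nd: "norm d = 1 - norm x" using y True by (simp add: d_def)
    have "d \<noteq> 0" using nd False True by auto
    moreover have "norm (x + d) \<le> 1" using norm_triangle_ineq[of x d] nd by linarith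
    moreover have "norm (x - d) \<le> 1" using norm_triangle_ineq4[of x d] nd by linarith
    ultimately show ?thesis using notext by blast
  qed
qed

lemma partB:
  assumes "k \<in> {0<..1}" "SQ_1 TYPE('a::real_normed_vector) k 1"
  shows "\<not> strictly_convex_space TYPE('a)"
proof
  assume sc: "strictly_convex_space TYPE('a)"
  obtain x :: 'a where x: "norm x = 1" using SQ_1_nonempty[OF assms(2)] by blast
  then obtain y :: 'a where y: "norm y = 1" "norm (k *\<^sub>R x + y) \<le> 1" "norm (k *\<^sub>R x - y) \<le> 1"
    using SQ_1_single[OF assms(2)] by fastforce
  define u where "u = y + k *\<^sub>R x"
  define v where "v = y - k *\<^sub>R x"
  have uv: "u + v = 2 *\<^sub>R y" by (simp add: u_def v_def scaleR_2)
  have nu: "norm u \<le> 1" using y(2) by (simp add: u_def add.commute)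
  have nv: "norm v \<le> 1" using y(3) norm_minus_commute[of "k *\<^sub>R x" y] by (simp add: v_def)
  have "2 = norm (u + v)" using uv y(1) by simp
  also have "\<dots> \<le> norm u + norm v" by (rule norm_triangle_ineq)
  finally have "norm u = 1" "norm v = 1" using nu nv by linarith+
  moreover have "u \<noteq> v"
  proof
    assume "u = v"
    then have "y + k *\<^sub>R x - (y - k *\<^sub>R x) = 0" by (simp add: u_def v_def)
    moreover have "y + k *\<^sub>R x - (y - k *\<^sub>R x) = (2 * k) *\<^sub>R x"
      by (simp add: scaleR_2 algebra_simps flip: scaleR_scaleR)
    ultimately have "(2 * k) *\<^sub>R x = 0" by simp
    then show False using assms(1) x by auto
  qed
  ultimately have "norm (u + v) < 2" using sc unfolding strictly_convex_space_def by blast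
  with uv y(1) show False by simp
qed

lemma fin_to_1:
  assumes "SQ_fin T r s" shows "SQ_1 T r s"
  using assms unfolding SQ_fin_def SQ_1_def by blast

theorem lemma6p5:
  shows "((\<exists>k\<in>{0<..1}. SQ_1 TYPE('a::banach) 1 k) \<longrightarrow> (\<forall>x::'a. \<not> x extreme_point_of cball 0 1))
       \<and> (SQ_fin_one_lt1 TYPE('a) \<longrightarrow> (\<forall>x::'a. \<not> x extreme_point_of cball 0 1))
       \<and> ((\<exists>k\<in>{0<..1}. SQ_1 TYPE('a) k 1) \<longrightarrow> \<not> strictly_convex_space TYPE('a))
       \<and> (SQ_fin_lt1_one TYPE('a) \<longrightarrow> \<not> strictly_convex_space TYPE('a))"
proof (intro conjI impI allI)
  have h: "(1/2::real) \<in> {0<..<1}" "(1/2::real) \<in> {0<..1}" by auto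
  show "\<not> x extreme_point_of cball 0 1" if "\<exists>k\<in>{0<..1}. SQ_1 TYPE('a) 1 k" for x :: 'a
    using that partA by blast
  show "\<not> x extreme_point_of cball 0 1" if "SQ_fin_one_lt1 TYPE('a)" for x :: 'a
    using that h partA[OF h(2) fin_to_1] unfolding SQ_fin_one_lt1_def by blast
  show "\<not> strictly_convex_space TYPE('a)" if "\<exists>k\<in>{0<..1}. SQ_1 TYPE('a) k 1"
    using that partB by blast
  show "\<not> strictly_convex_space TYPE('a)" if "SQ_fin_lt1_one TYPE('a)"
    using that h partB[OF h(2) fin_to_1] unfolding SQ_fin_lt1_one_def by blast
qed

end
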